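(* Let $\mathcal H$ be a 1-constituent CCRN of order two, and let $A$ be a MAS of $\mathcal H$ with exactly two reactions. Then there is no other MAS of $\mathcal H$ (with a different reaction set) having the same FWMC partition as $A$.
   Context: A chemical reaction network (CRN) consists of a finite species set $\mathcal S$ and a finite set $\mathcal R$ of reactions $r^-\to r^+$ with $r^-\ne r^+\in\mathbb Z_{\ge0}^{\mathcal S}$; input/output matrices $\mathbb S^-,\mathbb S^+$ have columns $r^-,r^+$, and $\mathbb S=\mathbb S^+-\mathbb S^-$. $(\mathbb A)_M^N$ denotes the submatrix with rows in $M$ and columns in $N$; $\mathbf v\gg\mathbf0$ means all entries $>0$, and $\mathbf v>\mathbf0$ means all entries $\ge0$ and $\mathbf v\ne\mathbf0$. A 1-constituent CCRN of order two is a CRN whose species are clusters $\bar 1,\bar2,\dots,\bar L$ (cluster $\bar n$ has size $n$), whose complexes are multisets of at most two clusters, and whose reactions conserve total size: for each reaction $r^-\to r^+$, $\sum_n n\,r^-_{\bar n}=\sum_n n\,r^+_{\bar n}$ (so $\mathbf x=(1,2,\dots,L)$ is a conservation law). A motif $(\mathcal M,\mathcal R')$ ($\mathcal M\subseteq\mathcal S,\mathcal R'\subseteq\mathcal R$) is exclusively autocatalytic if: (i) some $\mathbf v\gg\mathbf0$ in $\mathbb R^{\mathcal R'}$ has $(\mathbb S)_{\mathcal M}^{\mathcal R'}\mathbf v\gg\mathbf 0$; (ii) every row and (iii) every column of $(\mathbb S^-)_{\mathcal M}^{\mathcal R'}$ is semi-positive. An autocatalytic core is an exclusively autocatalytic motif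 $(A_C,\mathcal R_A)$ no proper sub-motif ($\mathcal M'\subseteq A_C$, $\mathcal R''\subseteq\mathcal R_A$) of which is exclusively autocatalytic. The minimal autocatalytic subnetwork (MAS) $A=(\mathcal S_A,\mathcal R_A)$ of a core $(A_C,\mathcal R_A)$ has reaction set $\mathcal R_A$ and species set $\mathcal S_A$ consisting of all species occurring in some input or output complex of a reaction in $\mathcal R_A$; each MAS is assumed to have a unique core. Put $\overline{\mathbb S}=(\mathbb S)_{\mathcal S_A}^{\mathcal R_A}$. FWMC partition of a MAS $A$: the quadruple (food set, waste set, non-core member set, core set), where the food set consists of the species of $\mathcal S_A$ whose row in $\overline{\mathbb S}$ has all entries $\le0$, the waste set those whose row has all entries $\ge0$, the member set those whose row has both a positive and a negative entry, the core set is $A_C$ (contained in the member set), and the non-core member set is the member set minus $A_C$. *)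

theory Defs
  imports Complex_Main "HOL-Library.Multiset"
begin

text \<open>Reactions are pairs (input complex, output complex) of multisets of species.
  In a 1-constituent CCRN the species are the clusters 1..L, identified with their size.\<close>

type_synonym reaction = "nat multiset \<times> nat multiset"

definition ccrn2 :: "nat \<Rightarrow> reaction set \<Rightarrow> bool" where
  "ccrn2 L R \<longleftrightarrow> finite R \<and>
     (\<forall>r\<in>R. fst r \<noteq> snd r
        \<and> size (fst r) \<le> 2 \<and> size (snd r) \<le> 2
        \<and> set_mset (fst r) \<subseteq> {1..L} \<and> set_mset (snd r) \<subseteq> {1..L}
        \<and> sum_mset (fst r) = sum_mset (snd r))"

definition sin :: "nat \<Rightarrow> reaction \<Rightarrow> nat" where
  "sin s r = count (fst r) s"

definition stoich :: "nat \<Rightarrow> reaction \<Rightarrow> int" where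
  "stoich s r = int (count (snd r) s) - int (count (fst r) s)"

text \<open>Exclusively autocatalytic motif (M, R') of the CRN with species {1..L} and reactions R.
  Motifs are taken nonempty (M \<noteq> {}; by (ii)/(iii) then also R' \<noteq> {}).\<close>
definition excl_autocatalytic :: "nat \<Rightarrow> reaction set \<Rightarrow> nat set \<Rightarrow> reaction set \<Rightarrow> bool" where
  "excl_autocatalytic L R M R' \<longleftrightarrow>
     M \<subseteq> {1..L} \<and> R' \<subseteq> R \<and> M \<noteq> {} \<and>
     (\<exists>v :: reaction \<Rightarrow> real. (\<forall>r\<in>R'. v r > 0) \<and>
        (\<forall>s\<in>M. (\<Sum>r\<in>R'. of_int (stoich s r) * v r) > 0)) \<and>
     (\<forall>s\<in>M. \<exists>r\<in>R'. sin s r > 0) \<and>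
     (\<forall>r\<in>R'. \<exists>s\<in>M. sin s r > 0)"

definition autocatalytic_core :: "nat \<Rightarrow> reaction set \<Rightarrow> nat set \<Rightarrow> reaction set \<Rightarrow> bool" where
  "autocatalytic_core L R AC RA \<longleftrightarrow>
     excl_autocatalytic L R AC RA \<and>
     (\<forall>M' R''. M' \<subseteq> AC \<longrightarrow> R'' \<subseteq> RA \<longrightarrow> (M', R'') \<noteq> (AC, RA)
        \<longrightarrow> \<not> excl_autocatalytic L R M' R'')"

text \<open>A MAS is determined by its reaction set RA (its species set is that of the reactions).\<close>
definition is_MAS :: "nat \<Rightarrow> reaction set \<Rightarrow> reaction set \<Rightarrow> bool" where
  "is_MAS L R RA \<longleftrightarrow> (\<exists>AC. autocatalytic_core L R AC RA)"

definition MAS_species :: "reaction set \<Rightarrow> nat set" where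
  "MAS_species RA = (\<Union>r\<in>RA. set_mset (fst r) \<union> set_mset (snd r))"

text \<open>The core of a MAS (unique by the standing assumption).\<close>
definition core_of :: "nat \<Rightarrow> reaction set \<Rightarrow> reaction set \<Rightarrow> nat set" where
  "core_of L R RA = (THE AC. autocatalytic_core L R AC RA)"

definition food_set :: "reaction set \<Rightarrow> nat set" where
  "food_set RA = {s \<in> MAS_species RA. \<forall>r\<in>RA. stoich s r \<le> 0}"

definition waste_set :: "reaction set \<Rightarrow> nat set" where
  "waste_set RA = {s \<in> MAS_species RA. \<forall>r\<in>RA. stoich s r \<ge> 0}"

definition member_set :: "reaction set \<Rightarrow> nat set" where
  "member_set RA = {s \<in> MAS_species RA. (\<exists>r\<in>RA. stoich s r > 0) \<and> (\<exists>r\<in>RA. stoich s r < 0)}"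

definition FWMC :: "nat \<Rightarrow> reaction set \<Rightarrow> reaction set \<Rightarrow> nat set \<times> nat set \<times> nat set \<times> nat set" where
  "FWMC L R RA = (food_set RA, waste_set RA, member_set RA - core_of L R RA, core_of L R RA)"

end

theory Submission
  imports Defs
begin

definition opt :: "nat \<Rightarrow> nat multiset" where
  "opt x = (if x = 0 then {#} else {#x#})"

lemma count_opt: "count (opt x) s = (if x \<noteq> 0 \<and> s = x then 1 else 0)"
  by (auto simp: opt_def)

lemma mem_opt: "s \<in># opt x \<longleftrightarrow> x \<noteq> 0 \<and> s = x"
  by (auto simp: opt_def)

lemma sum_opt: "sum_mset (opt x) = x"
  by (auto simp: opt_def)

definition valid :: "nat \<Rightarrow> reaction \<Rightarrow> bool" where
  "valid L r \<longleftrightarrow> fst r \<noteq> snd r \<and> size (fst r) \<le> 2 \<and> size (snd r) \<le> 2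
        \<and> set_mset (fst r) \<subseteq> {1..L} \<and> set_mset (snd r) \<subseteq> {1..L}
        \<and> sum_mset (fst r) = sum_mset (snd r)"

lemma ccrn2_valid: "ccrn2 L R \<Longrightarrow> r \<in> R \<Longrightarrow> valid L r"
  unfolding ccrn2_def valid_def by blast

lemma small:
  assumes "size X \<le> 1" "0 \<notin># X"
  shows "X = opt (sum_mset X)"
proof (cases "size X")
  case 0
  then show ?thesis by (simp add: opt_def)
next
  case (Suc n)
  then have "size X = 1" using assms(1) by simp
  then obtain t where "X = {#t#}" using size_1_singleton_mset by blast
  then show ?thesis using assms(2) by (auto simp: opt_def)
qed

lemma split1:
  assumes "s \<in># M" "size M \<le> 2" "set_mset M \<subseteq> {1..L}"
  shows "M = add_mset s (opt (sum_mset M - s))"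
proof -
  define X where "X = M - {#s#}"
  have M: "M = add_mset s X" using assms(1) unfolding X_def by simp
  have "size X \<le> 1" using assms(2) M by (metis Suc_1 Suc_le_mono size_add_mset)
  moreover have "0 \<notin># X" using assms(3) M by auto
  ultimately have "X = opt (sum_mset X)" by (rule small)
  moreover have "sum_mset M - s = sum_mset X" using M by simp
  ultimately show ?thesis using M by simp
qed

lemma L1:
  assumes "valid L r" "s \<in># fst r"
  shows "s \<notin># snd r"
proof
  assume h: "s \<in># snd r"
  have v: "size (fst r) \<le> 2" "set_mset (fst r) \<subseteq> {1..L}" "size (snd r) \<le> 2" "set_mset (snd r) \<subseteq> {1..L}"
    "sum_mset (fst r) = sum_mset (snd r)" "fst r \<noteq> snd r"
    using assms(1) unfolding valid_def by auto
  have "fst r = add_mset s (opt (sum_mset (fst r) - s))" using split1[OF assms(2) v(1,2)] .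
  moreover have "snd r = add_mset s (opt (sum_mset (snd r) - s))" using split1[OF h v(3,4)] .
  ultimately show False using v(5,6) by metis
qed

lemma stoich_neg:
  assumes "valid L r" "s \<in># fst r"
  shows "stoich s r < 0"
  using L1[OF assms] assms(2) unfolding stoich_def
  by (simp add: not_in_iff)

lemma stoich_pos_mem:
  assumes "stoich s r > 0"
  shows "s \<in># snd r"
  using assms unfolding stoich_def
  by (metis count_greater_zero_iff of_nat_0_less_iff zero_less_diff gr_zeroI less_asym' of_nat_less_iff diff_gt_0_iff_gt)

lemma fin_int:
  fixes a b x y z u x' y' z' u' :: int
  assumes "y = b \<or> u = a" "y' = b \<or> u' = a" "x = 0 \<or> x = x' \<or> x = z'"
"z = 0 \<or> z = x' \<or> z = z'"
"x' = 0 \<or> x' = x \<or> x' = z"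
"z' = 0 \<or> z' = x \<or> z' = z"
"y = 0 \<or> y = a \<or> y = b \<or> y = y' \<or> y = u'"
"u = 0 \<or> u = a \<or> u = b \<or> u = y' \<or> u = u'"
"y' = 0 \<or> y' = a \<or> y' = b \<or> y' = y \<or> y' = u"
"u' = 0 \<or> u' = a \<or> u' = b \<or> u' = y \<or> u' = u"
"1 \<le> a" "1 \<le> b" "a \<noteq> b" "a + x = b + y" "b + z = a + u" "x \<noteq> a" "x \<noteq> b" "z \<noteq> a" "z \<noteq> b" "y \<noteq> a" "u \<noteq> b"
"a + x' = b + y'" "b + z' = a + u'" "x' \<noteq> a" "x' \<noteq> b" "z' \<noteq> a" "z' \<noteq> b" "y' \<noteq> a" "u' \<noteq> b"
"x \<ge> 0" "y \<ge> 0" "z \<ge> 0" "u \<ge> 0" "x' \<ge> 0" "y' \<ge> 0" "z' \<ge> 0" "u' \<ge> 0"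
  shows "x=x' \<and> y=y' \<and> z=z' \<and> u=u'"
  using assms by smt

lemma fin:
  fixes a b x y z u x' y' z' u' :: nat
  assumes "a \<ge> 1" "b \<ge> 1" "a \<noteq> b"
  "a + x = b + y" "b + z = a + u" "y = b \<or> u = a" "x \<noteq> a" "x \<noteq> b" "z \<noteq> a" "z \<noteq> b" "y \<noteq> a" "u \<noteq> b"
  "a + x' = b + y'" "b + z' = a + u'" "y' = b \<or> u' = a" "x' \<noteq> a" "x' \<noteq> b" "z' \<noteq> a" "z' \<noteq> b" "y' \<noteq> a" "u' \<noteq> b"
  "{x,z}-{0} = {x',z'}-{0}" "{y,u}-{0,a,b} = {y',u'}-{0,a,b}"
  shows "x=x' \<and> y=y' \<and> z=z' \<and> u=u'"
proof -
  have F: "\<And>s. (s \<in> {x,z} \<and> s \<noteq> 0) = (s \<in> {x',z'} \<and> s \<noteq> 0)" using assms(22) by blast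
  have W: "\<And>s. (s \<in> {y,u} \<and> s \<notin> {0,a,b}) = (s \<in> {y',u'} \<and> s \<notin> {0,a,b})" using assms(23) by blast
  have f1: "x = 0 \<or> x = x' \<or> x = z'" using F[of x] by auto
  have f2: "z = 0 \<or> z = x' \<or> z = z'" using F[of z] by auto
  have f3: "x' = 0 \<or> x' = x \<or> x' = z" using F[of x'] by auto
  have f4: "z' = 0 \<or> z' = x \<or> z' = z" using F[of z'] by auto
  have w1: "y = 0 \<or> y = a \<or> y = b \<or> y = y' \<or> y = u'" using W[of y] by auto
  have w2: "u = 0 \<or> u = a \<or> u = b \<or> u = y' \<or> u = u'" using W[of u] by auto
  have w3: "y' = 0 \<or> y' = a \<or> y' = b \<or> y' = y \<or> y' = u" using W[of y'] by auto
  have w4: "u' = 0 \<or> u' = a \<or> u' = b \<or> u' = y \<or> u' = u" using W[of u'] by auto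
  have i0: "int y = int b \<or> int u = int a" using assms(6) by auto
  have i1: "int y' = int b \<or> int u' = int a" using assms(15) by auto
  have i2: "int x = 0 \<or> int x = int x' \<or> int x = int z'" using f1 by auto
  have i3: "int z = 0 \<or> int z = int x' \<or> int z = int z'" using f2 by auto
  have i4: "int x' = 0 \<or> int x' = int x \<or> int x' = int z" using f3 by auto
  have i5: "int z' = 0 \<or> int z' = int x \<or> int z' = int z" using f4 by auto
  have i6: "int y = 0 \<or> int y = int a \<or> int y = int b \<or> int y = int y' \<or> int y = int u'" using w1 by auto
  have i7: "int u = 0 \<or> int u = int a \<or> int u = int b \<or> int u = int y' \<or> int u = int u'" using w2 by auto
  have i8: "int y' = 0 \<or> int y' = int a \<or> int y' = int b \<or> int y' = int y \<or> int y' = int u" using w3 by auto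
  have i9: "int u' = 0 \<or> int u' = int a \<or> int u' = int b \<or> int u' = int y \<or> int u' = int u" using w4 by auto
  have i10: "1 \<le> int a" using assms(1) by auto
  have i11: "1 \<le> int b" using assms(2) by auto
  have i12: "int a \<noteq> int b" using assms(3) by auto
  have i13: "int a + int x = int b + int y" using assms(4) by auto
  have i14: "int b + int z = int a + int u" using assms(5) by auto
  have i15: "int x \<noteq> int a" using assms(7) by auto
  have i16: "int x \<noteq> int b" using assms(8) by auto
  have i17: "int z \<noteq> int a" using assms(9) by auto
  have i18: "int z \<noteq> int b" using assms(10) by auto
  have i19: "int y \<noteq> int a" using assms(11) by auto
  have i20: "int u \<noteq> int b" using assms(12) by auto
  have i21: "int a + int x' = int b + int y'" using assms(13) by auto
  have i22: "int b + int z' = int a + int u'" using assms(14) by auto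
  have i23: "int x' \<noteq> int a" using assms(16) by auto
  have i24: "int x' \<noteq> int b" using assms(17) by auto
  have i25: "int z' \<noteq> int a" using assms(18) by auto
  have i26: "int z' \<noteq> int b" using assms(19) by auto
  have i27: "int y' \<noteq> int a" using assms(20) by auto
  have i28: "int u' \<noteq> int b" using assms(21) by auto
  have n0: "int x \<ge> 0" by simp
  have n1: "int y \<ge> 0" by simp
  have n2: "int z \<ge> 0" by simp
  have n3: "int u \<ge> 0" by simp
  have n4: "int x' \<ge> 0" by simp
  have n5: "int y' \<ge> 0" by simp
  have n6: "int z' \<ge> 0" by simp
  have n7: "int u' \<ge> 0" by simp
  have "int x = int x' \<and> int y = int y' \<and> int z = int z' \<and> int u = int u'"
    by (rule fin_int[OF i0 i1 i2 i3 i4 i5 i6 i7 i8 i9 i10 i11 i12 i13 i14 i15 i16 i17 i18 i19 i20 i21 i22 i23 i24 i25 i26 i27 i28 n0 n1 n2 n3 n4 n5 n6 n7])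
  then show ?thesis by simp
qed

lemma sin_pos: "sin s r > 0 \<longleftrightarrow> s \<in># fst r"
  unfolding sin_def by simp

lemma pair:
  assumes core: "autocatalytic_core L R {a,b} R'" and ab: "a \<noteq> b"
    and fin: "finite R'" and val: "\<forall>r\<in>R'. valid L r"
  shows "\<exists>\<rho> \<sigma>. R' = {\<rho>,\<sigma>} \<and> a \<in># fst \<rho> \<and> b \<notin># fst \<rho> \<and> b \<in># snd \<rho> \<and> a \<notin># snd \<rho>
     \<and> b \<in># fst \<sigma> \<and> a \<notin># fst \<sigma> \<and> a \<in># snd \<sigma> \<and> b \<notin># snd \<sigma>
     \<and> stoich b \<rho> * stoich a \<sigma> > stoich a \<rho> * stoich b \<sigma>"
proof -
  have ex: "excl_autocatalytic L R {a,b} R'" and minl: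
    "\<And>M' R''. M' \<subseteq> {a,b} \<Longrightarrow> R'' \<subseteq> R' \<Longrightarrow> (M', R'') \<noteq> ({a,b}, R') \<Longrightarrow> \<not> excl_autocatalytic L R M' R''"
    using core unfolding autocatalytic_core_def by blast+
  obtain v :: "reaction \<Rightarrow> real" where vpos: "\<forall>r\<in>R'. v r > 0"
    and vs: "\<forall>s\<in>{a,b}. (\<Sum>r\<in>R'. of_int (stoich s r) * v r) > 0"
    using ex unfolding excl_autocatalytic_def by blast
  have cons: "\<And>r. r \<in> R' \<Longrightarrow> a \<in># fst r \<or> b \<in># fst r"
    using ex unfolding excl_autocatalytic_def sin_pos by blast
  have sub: "{a,b} \<subseteq> {1..L}" "R' \<subseteq> R" using ex unfolding excl_autocatalytic_def by auto
  define f where "f r = of_int (stoich a r) * v r" for r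
  define g where "g r = of_int (stoich b r) * v r" for r
  define A where "A = {r\<in>R'. stoich b r > 0}"
  define B where "B = {r\<in>R'. stoich a r > 0}"
  have Aprop: "a \<in># fst r \<and> b \<notin># fst r \<and> b \<in># snd r \<and> a \<notin># snd r \<and> stoich a r < 0" if "r \<in> A" for r
  proof -
    have r: "r \<in> R'" "stoich b r > 0" using that A_def by auto
    have "b \<in># snd r" using stoich_pos_mem r(2) .
    moreover have "b \<notin># fst r" using L1 val r(1) \<open>b \<in># snd r\<close> by blast
    moreover have "a \<in># fst r" using cons[OF r(1)] calculation by blast
    moreover have "a \<notin># snd r" using L1 val r(1) \<open>a \<in># fst r\<close> by blast
    moreover have "stoich a r < 0" using stoich_neg val r(1) \<open>a \<in># fst r\<close> by blast
    ultimately show ?thesis by blast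
  qed
  have Bprop: "b \<in># fst r \<and> a \<notin># fst r \<and> a \<in># snd r \<and> b \<notin># snd r \<and> stoich b r < 0" if "r \<in> B" for r
  proof -
    have r: "r \<in> R'" "stoich a r > 0" using that B_def by auto
    have "a \<in># snd r" using stoich_pos_mem r(2) .
    moreover have "a \<notin># fst r" using L1 val r(1) \<open>a \<in># snd r\<close> by blast
    moreover have "b \<in># fst r" using cons[OF r(1)] calculation by blast
    moreover have "b \<notin># snd r" using L1 val r(1) \<open>b \<in># fst r\<close> by blast
    moreover have "stoich b r < 0" using stoich_neg val r(1) \<open>b \<in># fst r\<close> by blast
    ultimately show ?thesis by blast
  qed
  have disj: "A \<inter> B = {}" using Aprop B_def by fastforce
  have finA: "finite A" and finB: "finite B" using fin A_def B_def by auto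
  have AB: "A \<union> B \<subseteq> R'" using A_def B_def by auto
  define C where "C = R' - (A \<union> B)"
  have finC: "finite C" using fin C_def by auto
  have R'eq: "R' = (A \<union> B) \<union> C" using AB C_def by auto
  have disj2: "(A \<union> B) \<inter> C = {}" using C_def by auto
  have fsum: "sum f R' = sum f A + sum f B + sum f C"
    using R'eq disj disj2 finA finB finC by (simp add: sum.union_disjoint)
  have gsum: "sum g R' = sum g A + sum g B + sum g C"
    using R'eq disj disj2 finA finB finC by (simp add: sum.union_disjoint)
  have fC: "sum f C \<le> 0"
  proof (rule sum_nonpos)
    fix r assume h: "r \<in> C"
    then have "r \<in> R'" "r \<notin> B" unfolding C_def by blast+
    then have "\<not> stoich a r > 0" unfolding B_def by blast
    then have "of_int (stoich a r) \<le> (0::real)" by simp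
    moreover have "v r > 0" using vpos \<open>r \<in> R'\<close> by blast
    ultimately show "f r \<le> 0" unfolding f_def by (simp add: mult_nonpos_nonneg)
  qed
  have gC: "sum g C \<le> 0"
  proof (rule sum_nonpos)
    fix r assume h: "r \<in> C"
    then have "r \<in> R'" "r \<notin> A" unfolding C_def by blast+
    then have "\<not> stoich b r > 0" unfolding A_def by blast
    then have "of_int (stoich b r) \<le> (0::real)" by simp
    moreover have "v r > 0" using vpos \<open>r \<in> R'\<close> by blast
    ultimately show "g r \<le> 0" unfolding g_def by (simp add: mult_nonpos_nonneg)
  qed
  have fA: "sum f A \<le> 0"
  proof (rule sum_nonpos)
    fix r assume h: "r \<in> A"
    then have "r \<in> R'" unfolding A_def by blast
    have "stoich a r < 0" using Aprop[OF h] by blast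
    then have "of_int (stoich a r) \<le> (0::real)" by simp
    moreover have "v r > 0" using vpos \<open>r \<in> R'\<close> by blast
    ultimately show "f r \<le> 0" unfolding f_def by (simp add: mult_nonpos_nonneg)
  qed
  have gB: "sum g B \<le> 0"
  proof (rule sum_nonpos)
    fix r assume h: "r \<in> B"
    then have "r \<in> R'" unfolding B_def by blast
    have "stoich b r < 0" using Bprop[OF h] by blast
    then have "of_int (stoich b r) \<le> (0::real)" by simp
    moreover have "v r > 0" using vpos \<open>r \<in> R'\<close> by blast
    ultimately show "g r \<le> 0" unfolding g_def by (simp add: mult_nonpos_nonneg)
  qed
  have sf: "sum f R' > 0" using vs unfolding f_def by auto
  have sg: "sum g R' > 0" using vs unfolding g_def by auto
  have QB: "sum f B > - sum f A" using fsum fC sf by linarith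
  have QA: "sum g A > - sum g B" using gsum gC sg by linarith
  have "\<exists>\<rho>\<in>A. \<exists>\<sigma>\<in>B. stoich b \<rho> * stoich a \<sigma> > stoich a \<rho> * stoich b \<sigma>"
  proof (rule ccontr)
    assume neg: "\<not> ?thesis"
    have le: "\<And>\<rho> \<sigma>. \<rho> \<in> A \<Longrightarrow> \<sigma> \<in> B \<Longrightarrow> g \<rho> * f \<sigma> \<le> f \<rho> * g \<sigma>"
    proof -
      fix \<rho> \<sigma> assume h: "\<rho> \<in> A" "\<sigma> \<in> B"
      from neg h have "\<not> stoich b \<rho> * stoich a \<sigma> > stoich a \<rho> * stoich b \<sigma>" by blast
      then have "stoich b \<rho> * stoich a \<sigma> \<le> stoich a \<rho> * stoich b \<sigma>" by linarith
      then have "real_of_int (stoich b \<rho> * stoich a \<sigma>) \<le> real_of_int (stoich a \<rho> * stoich b \<sigma>)"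
        by linarith
      moreover have "v \<rho> * v \<sigma> > 0" using h vpos A_def B_def by auto
      ultimately have "real_of_int (stoich b \<rho> * stoich a \<sigma>) * (v \<rho> * v \<sigma>) \<le> real_of_int (stoich a \<rho> * stoich b \<sigma>) * (v \<rho> * v \<sigma>)"
        by (simp add: mult_right_mono)
      then show "g \<rho> * f \<sigma> \<le> f \<rho> * g \<sigma>" unfolding f_def g_def by (simp add: algebra_simps)
    qed
    have "sum g A * sum f B = (\<Sum>\<rho>\<in>A. \<Sum>\<sigma>\<in>B. g \<rho> * f \<sigma>)" by (rule sum_product)
    also have "\<dots> \<le> (\<Sum>\<rho>\<in>A. \<Sum>\<sigma>\<in>B. f \<rho> * g \<sigma>)"
      by (intro sum_mono) (rule le)
    also have "\<dots> = sum f A * sum g B" by (rule sum_product[symmetric])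
    finally have 1: "sum g A * sum f B \<le> sum f A * sum g B" .
    have "(- sum g B) * (- sum f A) < sum g A * sum f B"
    proof -
      have "(- sum g B) * (- sum f A) \<le> (- sum g B) * sum f B"
        using gB QB fA by (intro mult_left_mono) auto
      also have "\<dots> < sum g A * sum f B" using QA QB fA by (intro mult_strict_right_mono) auto
      finally show ?thesis .
    qed
    with 1 show False by (simp add: mult.commute)
  qed
  then obtain \<rho> \<sigma> where r: "\<rho> \<in> A" "\<sigma> \<in> B" and D: "stoich b \<rho> * stoich a \<sigma> > stoich a \<rho> * stoich b \<sigma>" by blast
  have ne: "\<rho> \<noteq> \<sigma>" using r disj by auto
  have rR: "\<rho> \<in> R'" "\<sigma> \<in> R'" using r A_def B_def by auto
  note PA = Aprop[OF r(1)] and PB = Bprop[OF r(2)]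
  have "excl_autocatalytic L R {a,b} {\<rho>,\<sigma>}"
  proof -
    define w :: "reaction \<Rightarrow> real" where
      "w r = (if r = \<rho> then of_int (stoich a \<sigma> - stoich b \<sigma>) else of_int (stoich b \<rho> - stoich a \<rho>))" for r
    have sa\<sigma>: "stoich a \<sigma> > 0" using r B_def by auto
    have sb\<rho>: "stoich b \<rho> > 0" using r A_def by auto
    have w1: "\<forall>r\<in>{\<rho>,\<sigma>}. w r > 0" using sa\<sigma> sb\<rho> PA PB ne unfolding w_def by auto
    have "(\<Sum>r\<in>{\<rho>,\<sigma>}. of_int (stoich a r) * w r) = of_int (stoich b \<rho> * stoich a \<sigma> - stoich a \<rho> * stoich b \<sigma>)"
      using ne unfolding w_def by (simp add: algebra_simps)
    moreover have "(\<Sum>r\<in>{\<rho>,\<sigma>}. of_int (stoich b r) * w r) = of_int (stoich b \<rho> * stoich a \<sigma> - stoich a \<rho> * stoich b \<sigma>)"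
      using ne unfolding w_def by (simp add: algebra_simps)
    moreover have Dr: "real_of_int (stoich a \<rho>) * real_of_int (stoich b \<sigma>) < real_of_int (stoich b \<rho>) * real_of_int (stoich a \<sigma>)"
      using D by (metis of_int_less_iff of_int_mult)
    ultimately have w2: "\<forall>s\<in>{a,b}. (\<Sum>r\<in>{\<rho>,\<sigma>}. of_int (stoich s r) * w r) > 0" by auto
    show ?thesis unfolding excl_autocatalytic_def sin_pos
      using sub rR w1 w2 PA PB by blast
  qed
  then have "({a,b}, {\<rho>,\<sigma>}) = ({a,b}, R')" using minl[of "{a,b}" "{\<rho>,\<sigma>}"] rR by blast
  then have "R' = {\<rho>,\<sigma>}" by simp
  then show ?thesis using PA PB D by blast
qed

lemma params:
  assumes vr: "valid L \<rho>" and vs: "valid L \<sigma>" and ab: "a \<noteq> b"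
    and h: "a \<in># fst \<rho>" "b \<notin># fst \<rho>" "b \<in># snd \<rho>" "a \<notin># snd \<rho>"
      "b \<in># fst \<sigma>" "a \<notin># fst \<sigma>" "a \<in># snd \<sigma>" "b \<notin># snd \<sigma>"
    and D: "stoich b \<rho> * stoich a \<sigma> > stoich a \<rho> * stoich b \<sigma>"
  shows "\<exists>x y z u. \<rho> = (add_mset a (opt x), add_mset b (opt y)) \<and> \<sigma> = (add_mset b (opt z), add_mset a (opt u))
     \<and> a + x = b + y \<and> b + z = a + u \<and> (y = b \<or> u = a) \<and> x \<noteq> a \<and> x \<noteq> b \<and> z \<noteq> a \<and> z \<noteq> b
     \<and> y \<noteq> a \<and> u \<noteq> b"
proof -
  have vr': "size (fst \<rho>) \<le> 2" "set_mset (fst \<rho>) \<subseteq> {1..L}" "size (snd \<rho>) \<le> 2" "set_mset (snd \<rho>) \<subseteq> {1..L}"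
    "sum_mset (fst \<rho>) = sum_mset (snd \<rho>)" using vr unfolding valid_def by auto
  have vs': "size (fst \<sigma>) \<le> 2" "set_mset (fst \<sigma>) \<subseteq> {1..L}" "size (snd \<sigma>) \<le> 2" "set_mset (snd \<sigma>) \<subseteq> {1..L}"
    "sum_mset (fst \<sigma>) = sum_mset (snd \<sigma>)" using vs unfolding valid_def by auto
  define x where "x = sum_mset (fst \<rho>) - a"
  define y where "y = sum_mset (snd \<rho>) - b"
  define z where "z = sum_mset (fst \<sigma>) - b"
  define u where "u = sum_mset (snd \<sigma>) - a"
  have e1: "fst \<rho> = add_mset a (opt x)" unfolding x_def by (rule split1[OF h(1) vr'(1,2)])
  have e2: "snd \<rho> = add_mset b (opt y)" unfolding y_def by (rule split1[OF h(3) vr'(3,4)])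
  have e3: "fst \<sigma> = add_mset b (opt z)" unfolding z_def by (rule split1[OF h(5) vs'(1,2)])
  have e4: "snd \<sigma> = add_mset a (opt u)" unfolding u_def by (rule split1[OF h(7) vs'(3,4)])
  have a0: "a \<noteq> 0" using h(1) vr'(2) by auto
  have b0: "b \<noteq> 0" using h(3) vr'(4) by auto
  have s1: "a + x = b + y" using vr'(5) e1 e2 by (simp add: sum_opt)
  have s2: "b + z = a + u" using vs'(5) e3 e4 by (simp add: sum_opt)
  have xb: "x \<noteq> b" using h(2) e1 b0 by (auto simp: mem_opt)
  have ya: "y \<noteq> a" using h(4) e2 a0 by (auto simp: mem_opt)
  have za: "z \<noteq> a" using h(6) e3 a0 by (auto simp: mem_opt)
  have ub: "u \<noteq> b" using h(8) e4 b0 by (auto simp: mem_opt)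
  have st1: "stoich b \<rho> = 1 + (if y = b then 1 else 0)"
    using e1 e2 ab xb b0 unfolding stoich_def by (auto simp: count_opt)
  have st2: "stoich a \<rho> = - 1 - (if x = a then 1 else 0)"
    using e1 e2 ab ya a0 unfolding stoich_def by (auto simp: count_opt)
  have st3: "stoich a \<sigma> = 1 + (if u = a then 1 else 0)"
    using e3 e4 ab za a0 unfolding stoich_def by (auto simp: count_opt)
  have st4: "stoich b \<sigma> = - 1 - (if z = b then 1 else 0)"
    using e3 e4 ab ub b0 unfolding stoich_def by (auto simp: count_opt)
  have D': "(1 + (if y = b then 1 else 0)) * (1 + (if u = a then 1 else 0)) >
            (1 + (if x = a then 1 else 0)) * (1 + (if z = b then 1 else (0::int)))"
    using D unfolding st1 st2 st3 st4 by (simp add: algebra_simps)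
  have rest: "(y = b \<or> u = a) \<and> x \<noteq> a \<and> z \<noteq> b"
    using D' s1 s2 ab by (auto split: if_splits)
  show ?thesis
    apply (rule exI[of _ x], rule exI[of _ y], rule exI[of _ z], rule exI[of _ u])
    using e1 e2 e3 e4 s1 s2 xb ya za ub rest by (simp add: prod_eq_iff)
qed

lemma fw:
  assumes a0: "a \<noteq> 0" and b0: "b \<noteq> 0" and ab: "a \<noteq> b"
    and c: "a + x = b + y" "b + z = a + u" "y = b \<or> u = a" "x \<noteq> a" "x \<noteq> b" "z \<noteq> a" "z \<noteq> b"
      "y \<noteq> a" "u \<noteq> b"
    and RA: "RA = {(add_mset a (opt x), add_mset b (opt y)), (add_mset b (opt z), add_mset a (opt u))}"
  shows "food_set RA = {x,z} - {0}" "waste_set RA = {y,u} - {0,a,b}"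
proof -
  have d1: "x \<noteq> 0 \<Longrightarrow> x \<noteq> y" using c ab by arith
  have d2: "x \<noteq> 0 \<Longrightarrow> x \<noteq> u" using c ab by arith
  have d3: "z \<noteq> 0 \<Longrightarrow> z \<noteq> y" using c ab by arith
  have d4: "z \<noteq> 0 \<Longrightarrow> z \<noteq> u" using c ab by arith
  have sp: "MAS_species RA = {a,b} \<union> ({x,y,z,u} - {0})"
    unfolding MAS_species_def RA by (auto simp: opt_def)
  define r1 where "r1 = (add_mset a (opt x), add_mset b (opt y))"
  define r2 where "r2 = (add_mset b (opt z), add_mset a (opt u))"
  have RA': "RA = {r1, r2}" using RA r1_def r2_def by simp
  have st1: "stoich s r1 = int ((if s = b then 1 else 0) + (if y \<noteq> 0 \<and> s = y then 1 else 0))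
                          - int ((if s = a then 1 else 0) + (if x \<noteq> 0 \<and> s = x then 1 else 0))" for s
    unfolding stoich_def r1_def by (simp add: count_opt)
  have st2: "stoich s r2 = int ((if s = a then 1 else 0) + (if u \<noteq> 0 \<and> s = u then 1 else 0))
                          - int ((if s = b then 1 else 0) + (if z \<noteq> 0 \<and> s = z then 1 else 0))" for s
    unfolding stoich_def r2_def by (simp add: count_opt)
  have fin_sp: "s \<in> MAS_species RA \<Longrightarrow> s \<noteq> 0" for s using sp a0 b0 by auto
  have sa2: "stoich a r2 > 0" using st2[of a] ab c(6) by simp
  have sb1: "stoich b r1 > 0" using st1[of b] ab c(5) by simp
  have sa1: "stoich a r1 < 0" using st1[of a] ab c(8) by simp
  have sb2: "stoich b r2 < 0" using st2[of b] ab c(9) by simp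
  have sy1: "y \<noteq> 0 \<Longrightarrow> y \<noteq> x \<Longrightarrow> stoich y r1 > 0" using st1[of y] c(8) by simp
  have su2: "u \<noteq> 0 \<Longrightarrow> u \<noteq> z \<Longrightarrow> stoich u r2 > 0" using st2[of u] c(9) by simp
  have sx1: "x \<noteq> 0 \<Longrightarrow> stoich x r1 < 0" using st1[of x] c(4,5) d1 by simp
  have sx2: "x \<noteq> 0 \<Longrightarrow> stoich x r2 \<le> 0" using st2[of x] c(4,5) d2 by simp
  have sz2: "z \<noteq> 0 \<Longrightarrow> stoich z r2 < 0" using st2[of z] c(6,7) d4 by simp
  have sz1: "z \<noteq> 0 \<Longrightarrow> stoich z r1 \<le> 0" using st1[of z] c(6,7) d3 by simp
  have sy2: "y \<noteq> 0 \<Longrightarrow> y \<noteq> a \<Longrightarrow> y \<noteq> b \<Longrightarrow> stoich y r2 \<ge> 0" using st2[of y] d3 by auto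
  have su1: "u \<noteq> 0 \<Longrightarrow> u \<noteq> a \<Longrightarrow> u \<noteq> b \<Longrightarrow> stoich u r1 \<ge> 0" using st1[of u] d2 by auto
  have sy1': "y \<noteq> 0 \<Longrightarrow> stoich y r1 \<ge> 0" using st1[of y] c(8) d1 by auto
  have su2': "u \<noteq> 0 \<Longrightarrow> stoich u r2 \<ge> 0" using st2[of u] c(9) d4 by auto
  have yz: "y \<noteq> 0 \<Longrightarrow> y \<noteq> x" "y \<noteq> 0 \<Longrightarrow> y \<noteq> z" "u \<noteq> 0 \<Longrightarrow> u \<noteq> x" "u \<noteq> 0 \<Longrightarrow> u \<noteq> z"
    using d1 d2 d3 d4 by auto
  show "food_set RA = {x,z} - {0}"
  proof (rule set_eqI, rule iffI)
    fix s assume "s \<in> food_set RA"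
    then have s: "s \<in> MAS_species RA" "stoich s r1 \<le> 0" "stoich s r2 \<le> 0"
      unfolding food_set_def RA' by auto
    have "s \<noteq> a" using s sa2 by auto
    moreover have "s \<noteq> b" using s sb1 by auto
    moreover have "s = y \<Longrightarrow> s \<in> {x,z}" using s sy1 fin_sp[OF s(1)] by force
    moreover have "s = u \<Longrightarrow> s \<in> {x,z}" using s su2 fin_sp[OF s(1)] by force
    ultimately show "s \<in> {x,z} - {0}" using s(1) fin_sp[OF s(1)] unfolding sp by blast
  next
    fix s assume "s \<in> {x,z} - {0}"
    then have "s \<in> MAS_species RA" using sp by auto
    moreover have "\<forall>r\<in>RA. stoich s r \<le> 0" using \<open>s \<in> {x,z} - {0}\<close> RA' sx1 sx2 sz1 sz2 by fastforce
    ultimately show "s \<in> food_set RA" unfolding food_set_def by simp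
  qed
  show "waste_set RA = {y,u} - {0,a,b}"
  proof (rule set_eqI, rule iffI)
    fix s assume "s \<in> waste_set RA"
    then have s: "s \<in> MAS_species RA" "stoich s r1 \<ge> 0" "stoich s r2 \<ge> 0"
      unfolding waste_set_def RA' by auto
    have "s \<noteq> a" using s sa1 by auto
    moreover have "s \<noteq> b" using s sb2 by auto
    moreover have "s \<noteq> x \<or> x = 0" using s sx1 by force
    moreover have "s \<noteq> z \<or> z = 0" using s sz2 by force
    ultimately show "s \<in> {y,u} - {0,a,b}" using s(1) fin_sp[OF s(1)] unfolding sp by blast
  next
    fix s assume "s \<in> {y,u} - {0,a,b}"
    then have "s \<in> MAS_species RA" using sp by auto
    moreover have "\<forall>r\<in>RA. stoich s r \<ge> 0" using \<open>s \<in> {y,u} - {0,a,b}\<close> RA' sy1' sy2 su1 su2' by fastforce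
    ultimately show "s \<in> waste_set RA" unfolding waste_set_def by simp
  qed
qed

lemma two_core:
  assumes core: "autocatalytic_core L R AC RA" and c2: "card RA = 2" and val: "\<forall>r\<in>RA. valid L r"
  shows "\<exists>a b. a \<noteq> b \<and> AC = {a,b}"
proof -
  have ex: "excl_autocatalytic L R AC RA" and minl:
    "\<And>M' R''. M' \<subseteq> AC \<Longrightarrow> R'' \<subseteq> RA \<Longrightarrow> (M', R'') \<noteq> (AC, RA) \<Longrightarrow> \<not> excl_autocatalytic L R M' R''"
    using core unfolding autocatalytic_core_def by blast+
  obtain v :: "reaction \<Rightarrow> real" where vpos: "\<forall>r\<in>RA. v r > 0"
    and vs: "\<forall>s\<in>AC. (\<Sum>r\<in>RA. of_int (stoich s r) * v r) > 0"
    using ex unfolding excl_autocatalytic_def by blast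
  have rows: "\<forall>s\<in>AC. \<exists>r\<in>RA. s \<in># fst r" and cols: "\<forall>r\<in>RA. \<exists>s\<in>AC. s \<in># fst r"
    using ex unfolding excl_autocatalytic_def sin_pos by blast+
  have sub: "AC \<subseteq> {1..L}" "RA \<subseteq> R" "AC \<noteq> {}" using ex unfolding excl_autocatalytic_def by auto
  obtain p1 p2 where P: "RA = {p1,p2}" "p1 \<noteq> p2" using c2 card_2_iff[of RA] by auto
  obtain s where s: "s \<in> AC" using sub(3) by blast
  have "\<exists>r\<in>RA. stoich s r > 0"
  proof (rule ccontr)
    assume "\<not> ?thesis"
    have "(\<Sum>r\<in>RA. of_int (stoich s r) * v r) \<le> 0"
    proof (rule sum_nonpos)
      fix q assume q: "q \<in> RA"
      then have "stoich s q \<le> 0" using \<open>\<not> (\<exists>r\<in>RA. stoich s r > 0)\<close> by auto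
      then have "of_int (stoich s q) \<le> (0::real)" by simp
      moreover have "v q > 0" using vpos q by blast
      ultimately show "of_int (stoich s q) * v q \<le> 0" by (simp add: mult_nonpos_nonneg)
    qed
    moreover have "(\<Sum>r\<in>RA. of_int (stoich s r) * v r) > 0" using vs s by blast
    ultimately show False by linarith
  qed
  then obtain r where r: "r \<in> RA" "stoich s r > 0" by blast
  have sr: "s \<in># snd r" using stoich_pos_mem r(2) .
  obtain t where t: "t \<in> AC" "t \<in># fst r" using cols r(1) by blast
  have ts: "t \<noteq> s" using L1 val r(1) t(2) sr by blast
  obtain q0 where q0: "q0 \<in> RA" "s \<in># fst q0" using rows s by blast
  have q0r: "q0 \<noteq> r" using L1 val r(1) sr q0 by blast
  have cols2: "\<forall>q\<in>RA. \<exists>s'\<in>{s,t}. s' \<in># fst q"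
  proof
    fix q assume q: "q \<in> RA"
    show "\<exists>s'\<in>{s,t}. s' \<in># fst q"
    proof (cases "q = r")
      case True then show ?thesis using t by blast
    next
      case False
      then have "q = q0" using q q0 q0r r(1) P by auto
      then show ?thesis using q0 by blast
    qed
  qed
  have e1: "{s,t} \<subseteq> {1..L}" using sub(1) s t by blast
  have e2: "\<forall>s'\<in>{s,t}. (\<Sum>r\<in>RA. of_int (stoich s' r) * v r) > 0" using vs s t by blast
  have e3: "\<forall>s'\<in>{s,t}. \<exists>r\<in>RA. sin s' r > 0" using q0 r(1) t sin_pos by blast
  have e4: "\<forall>q\<in>RA. \<exists>s'\<in>{s,t}. sin s' q > 0" using cols2 sin_pos by blast
  have "excl_autocatalytic L R {s,t} RA"
    unfolding excl_autocatalytic_def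
    using e1 e2 e3 e4 sub(2) vpos by blast
  then have "({s,t}, RA) = (AC, RA)" using minl[of "{s,t}" RA] s t by blast
  then have "AC = {s,t}" by simp
  then show ?thesis using ts by blast
qed

lemma core_the:
  assumes "\<forall>RX. is_MAS L R RX \<longrightarrow> (\<exists>!AC. autocatalytic_core L R AC RX)" "is_MAS L R RX"
  shows "autocatalytic_core L R (core_of L R RX) RX"
  using assms unfolding core_of_def by (metis theI')

lemma core_structure:
  assumes core: "autocatalytic_core L R {a,b} RX" and ab: "a \<noteq> b" and cc: "ccrn2 L R"
  shows "\<exists>x y z u. RX = {(add_mset a (opt x), add_mset b (opt y)), (add_mset b (opt z), add_mset a (opt u))}
     \<and> a + x = b + y \<and> b + z = a + u \<and> (y = b \<or> u = a) \<and> x \<noteq> a \<and> x \<noteq> b \<and> z \<noteq> a \<and> z \<noteq> b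
     \<and> y \<noteq> a \<and> u \<noteq> b"
proof -
  have sub: "RX \<subseteq> R" using core unfolding autocatalytic_core_def excl_autocatalytic_def by blast
  have finR: "finite R" using cc unfolding ccrn2_def by blast
  have fin: "finite RX" using finite_subset[OF sub finR] .
  have val: "\<forall>r\<in>RX. valid L r" using sub ccrn2_valid[OF cc] by blast
  obtain \<rho> \<sigma> where p: "RX = {\<rho>,\<sigma>}" "a \<in># fst \<rho>" "b \<notin># fst \<rho>" "b \<in># snd \<rho>" "a \<notin># snd \<rho>"
     "b \<in># fst \<sigma>" "a \<notin># fst \<sigma>" "a \<in># snd \<sigma>" "b \<notin># snd \<sigma>"
     "stoich b \<rho> * stoich a \<sigma> > stoich a \<rho> * stoich b \<sigma>"
    using pair[OF core ab fin val] by blast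
  have v: "valid L \<rho>" "valid L \<sigma>" using val p(1) by auto
  obtain x y z u where q: "\<rho> = (add_mset a (opt x), add_mset b (opt y))" "\<sigma> = (add_mset b (opt z), add_mset a (opt u))"
     "a + x = b + y \<and> b + z = a + u \<and> (y = b \<or> u = a) \<and> x \<noteq> a \<and> x \<noteq> b \<and> z \<noteq> a \<and> z \<noteq> b
     \<and> y \<noteq> a \<and> u \<noteq> b"
    using params[OF v ab p(2-10)] by blast
  show ?thesis using p(1) q by blast
qed

theorem mainTheorem12:
  fixes L :: nat and R :: "reaction set" and RA RB :: "reaction set"
  assumes "ccrn2 L R"
    and unique_core: "\<forall>RX. is_MAS L R RX \<longrightarrow> (\<exists>!AC. autocatalytic_core L R AC RX)"
    and "is_MAS L R RA" and "card RA = 2"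
    and "is_MAS L R RB" and "RB \<noteq> RA"
  shows "FWMC L R RB \<noteq> FWMC L R RA"
proof
  assume eq: "FWMC L R RB = FWMC L R RA"
  have cA: "autocatalytic_core L R (core_of L R RA) RA" using core_the[OF unique_core assms(3)] .
  have cB: "autocatalytic_core L R (core_of L R RB) RB" using core_the[OF unique_core assms(5)] .
  have eqs: "food_set RB = food_set RA" "waste_set RB = waste_set RA" "core_of L R RB = core_of L R RA"
    using eq unfolding FWMC_def by auto
  have subA: "RA \<subseteq> R" using cA unfolding autocatalytic_core_def excl_autocatalytic_def by blast
  have valA: "\<forall>r\<in>RA. valid L r" using subA ccrn2_valid[OF assms(1)] by blast
  obtain a b where ab: "a \<noteq> b" "core_of L R RA = {a,b}" using two_core[OF cA assms(4) valA] by blast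
  have a1: "a \<ge> 1" "b \<ge> 1" using cA ab(2) unfolding autocatalytic_core_def excl_autocatalytic_def by auto
  have cA': "autocatalytic_core L R {a,b} RA" using cA ab(2) by simp
  have cB': "autocatalytic_core L R {a,b} RB" using cB ab(2) eqs(3) by simp
  obtain x y z u where A: "RA = {(add_mset a (opt x), add_mset b (opt y)), (add_mset b (opt z), add_mset a (opt u))}"
     "a + x = b + y" "b + z = a + u" "y = b \<or> u = a" "x \<noteq> a" "x \<noteq> b" "z \<noteq> a" "z \<noteq> b"
     "y \<noteq> a" "u \<noteq> b"
    using core_structure[OF cA' ab(1) assms(1)] by blast
  obtain x' y' z' u' where B: "RB = {(add_mset a (opt x'), add_mset b (opt y')), (add_mset b (opt z'), add_mset a (opt u'))}"
     "a + x' = b + y'" "b + z' = a + u'" "y' = b \<or> u' = a" "x' \<noteq> a" "x' \<noteq> b" "z' \<noteq> a" "z' \<noteq> b"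
     "y' \<noteq> a" "u' \<noteq> b"
    using core_structure[OF cB' ab(1) assms(1)] by blast
  have a0: "a \<noteq> 0" "b \<noteq> 0" using a1 by auto
  have fA: "food_set RA = {x,z} - {0}" "waste_set RA = {y,u} - {0,a,b}"
    using fw[OF a0 ab(1) A(2-10) A(1)] by auto
  have fB: "food_set RB = {x',z'} - {0}" "waste_set RB = {y',u'} - {0,a,b}"
    using fw[OF a0 ab(1) B(2-10) B(1)] by auto
  have "x = x' \<and> y = y' \<and> z = z' \<and> u = u'"
    using fin[OF a1 ab(1) A(2-10) B(2-10)] fA fB eqs(1,2) by auto
  then have "RA = RB" using A(1) B(1) by simp
  then show False using assms(6) by simp
qed

end
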